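(* Let $\mathcal{H}=\operatorname{coh}\mathbb{X}$ for a weighted projective line of weight type $(p_1,\ldots,p_t)$ and $\mathcal{C}=\mathcal{C}(\mathcal{H})$. Let $\langle\Phi\rangle$ act on $K_0(\mathcal{H})$ by $\Phi.y=-\Phi y$. (i) If at least one weight $p_i$ is even, then $y\mapsto\langle y,-\rangle$ induces an isomorphism $K_0(\mathcal{H})^{\langle\Phi\rangle}\xrightarrow{\sim}\overline{K}_0(\mathcal{C})^*=\operatorname{Hom}_{\mathbb{Z}}(\overline{K}_0(\mathcal{C}),\mathbb{Z})$, giving an exact sequence $0\to\overline{K}_0(\mathcal{C})^*\to K_0(\mathcal{H})\xrightarrow{1+\Phi}K_0(\mathcal{H})\to\overline{K}_0(\mathcal{C})\to0$. (ii) If all weights are odd, then with $K_0(\mathcal{H})_2=K_0(\mathcal{H})\otimes_{\mathbb{Z}}\mathbb{Z}_2$ (with induced $\Phi$-action), $y\mapsto\langle y,-\rangle_2$ induces an isomorphism $(K_0(\mathcal{H})_2)^{\langle\Phi\rangle}\xrightarrow{\sim}\overline{K}_0(\mathcal{C})^*=\operatorname{Hom}_{\mathbb{Z}}(\overline{K}_0(\mathcal{C}),\mathbb{Z}_2)$, giving an exact sequence $0\to\overline{K}_0(\mathcal{C})^*\to K_0(\mathcal{H})_2\xrightarrow{1+\Phi}K_0(\mathcal{H})_2\to\overline{K}_0(\mathcal{C})\to0$.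
   Context: $k$ algebraically closed; $\mathcal{H}=\operatorname{coh}\mathbb{X}$ hereditary abelian with Serre duality and AR translation $\tau$. Euler form $\langle[X],[Y]\rangle=\dim\operatorname{Hom}(X,Y)-\dim\operatorname{Ext}^1(X,Y)$ on $K_0(\mathcal{H})$, and $\langle-,-\rangle_2$ the induced $\mathbb{Z}_2$-valued form on $K_0(\mathcal{H})_2$. Coxeter transformation $\Phi[X]=[\tau X]$. With $\mathcal{D}=D^b(\mathcal{H})$, suspension $\Sigma$, $F=\tau^{-1}\Sigma$, the cluster category $\mathcal{C}=\mathcal{D}/F^{\mathbb{Z}}$ has objects of $\mathcal{D}$, $\operatorname{Hom}_{\mathcal{C}}(X,Y)=\bigoplus_i\operatorname{Hom}_{\mathcal{D}}(X,F^iY)$, projection $\pi$. $\overline{K}_0(\mathcal{C})$ is the Grothendieck group with respect to induced triangles (images under $\pi$ of exact triangles of $\mathcal{D}$, up to isomorphism); it is a quotient of $K_0(\mathcal{H})=K_0(\mathcal{D})$ via $[X]\mapsto[\pi X]$, namely $\operatorname{Coker}(1+\Phi)$, and it is free over $\mathbb{Z}$ in case (i) and over $\mathbb{Z}_2$ in case (ii). A linear form on $K_0(\mathcal{H})$ (resp. $K_0(\mathcal{H})_2$) vanishing on $\operatorname{Im}(1+\Phi)$ is identified with a linear form on $\overline{K}_0(\mathcal{C})$. *)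

theory Defs
  imports Main "HOL-Library.Z2" "HOL-Library.FuncSet"
begin

text \<open>Combinatorial model of K_0(coh X) for a weighted projective line of weight
type ps = [p_1,...,p_t]: the Z-basis is given by the classes of the summands of the
canonical tilting bundle T = direct sum of O(x), 0 <= x <= c, namely
O (vertex V0), O(j x_i) for 1 <= j < p_i (vertex Vij i j, i indexed from 0),
and O(c) (vertex Vc).\<close>

datatype vert = V0 | Vc | Vij nat nat

definition verts :: "nat list \<Rightarrow> vert set" where
  "verts ps = {V0, Vc} \<union> {Vij i j | i j. i < length ps \<and> 1 \<le> j \<and> j < ps ! i}"

text \<open>dim Hom(T_a, T_b) for summands of the tilting bundle (Ext^1 between them vanishes),
i.e. dimension of the graded piece S_(y-x) of the coordinate algebra.\<close>
fun homdim :: "vert \<Rightarrow> vert \<Rightarrow> nat" where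
  "homdim V0 V0 = 1"
| "homdim Vc Vc = 1"
| "homdim V0 Vc = 2"
| "homdim V0 (Vij i j) = 1"
| "homdim (Vij i j) Vc = 1"
| "homdim (Vij i j) (Vij i' j') = (if i = i' \<and> j \<le> j' then 1 else 0)"
| "homdim _ _ = 0"

text \<open>K_0(H) (coefficients 'a = int), resp. K_0(H)_2 = K_0(H) tensor Z_2 (coefficients
'a = bit): finitely supported coefficient vectors on the basis.\<close>
definition K0 :: "nat list \<Rightarrow> (vert \<Rightarrow> 'a::zero) set" where
  "K0 ps = {x. \<forall>v. v \<notin> verts ps \<longrightarrow> x v = 0}"

definition euler :: "nat list \<Rightarrow> (vert \<Rightarrow> 'a::comm_ring_1) \<Rightarrow> (vert \<Rightarrow> 'a) \<Rightarrow> 'a" where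
  "euler ps x y = (\<Sum>a\<in>verts ps. \<Sum>b\<in>verts ps. x a * of_nat (homdim a b) * y b)"

definition red :: "(vert \<Rightarrow> int) \<Rightarrow> (vert \<Rightarrow> bit)" where
  "red x = (\<lambda>v. of_int (x v))"

text \<open>Dual of Kbar_0(C) = Coker(1+Phi): Z-linear (= additive) forms on K_0 (resp. K_0 tensor Z_2),
with values in 'a, vanishing on Im(1+Phi).\<close>
definition lforms :: "nat list \<Rightarrow> ((vert \<Rightarrow> 'a) \<Rightarrow> (vert \<Rightarrow> 'a)) \<Rightarrow> ((vert \<Rightarrow> 'a::comm_ring_1) \<Rightarrow> 'a) set" where
  "lforms ps F = {f \<in> extensional (K0 ps).
      (\<forall>x\<in>K0 ps. \<forall>x'\<in>K0 ps. f (\<lambda>v. x v + x' v) = f x + f x') \<and>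
      (\<forall>x\<in>K0 ps. f (\<lambda>v. x v + F x v) = 0)}"

end

theory Submission
  imports Defs
begin

lemma tri_inj:
  fixes M :: "'v \<Rightarrow> 'v \<Rightarrow> 'a::comm_ring_1" and r :: "'v \<Rightarrow> nat"
  assumes fin: "finite S"
    and diag: "\<forall>a\<in>S. M a a = 1"
    and tri: "\<forall>a\<in>S. \<forall>b\<in>S. a \<noteq> b \<and> M a b \<noteq> 0 \<longrightarrow> r a < r b"
    and eq: "\<forall>b\<in>S. (\<Sum>a\<in>S. y a * M a b) = 0"
  shows "\<forall>b\<in>S. y b = 0"
proof -
  have "\<forall>b\<in>S. r b < n \<longrightarrow> y b = 0" for n
  proof (induction n)
    case 0 then show ?case by simp
  next
    case (Suc n)
    show ?case
    proof (intro ballI impI)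
      fix b assume b: "b \<in> S" "r b < Suc n"
      have "(\<Sum>a\<in>S. y a * M a b) = y b * M b b + (\<Sum>a\<in>S-{b}. y a * M a b)"
        using fin b by (simp add: sum.remove)
      also have "(\<Sum>a\<in>S-{b}. y a * M a b) = 0"
      proof (rule sum.neutral, rule ballI)
        fix a assume a: "a \<in> S - {b}"
        show "y a * M a b = 0"
        proof (cases "M a b = 0")
          case False
          then have "r a < r b" using tri a b by auto
          then show ?thesis using Suc.IH a b by auto
        qed simp
      qed
      finally show "y b = 0" using eq b diag by simp
    qed
  qed
  then show ?thesis by blast
qed

lemma tri_ex:
  fixes M :: "'v \<Rightarrow> 'v \<Rightarrow> 'a::comm_ring_1" and r :: "'v \<Rightarrow> nat"
  assumes fin: "finite S"
    and diag: "\<forall>a\<in>S. M a a = 1"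
    and tri: "\<forall>a\<in>S. \<forall>b\<in>S. a \<noteq> b \<and> M a b \<noteq> 0 \<longrightarrow> r a < r b"
  shows "\<exists>y. (\<forall>a. a \<notin> S \<longrightarrow> y a = 0) \<and> (\<forall>b\<in>S. (\<Sum>a\<in>S. y a * M a b) = g b)"
proof -
  have "\<exists>y. (\<forall>a. a \<notin> S \<or> r a \<ge> n \<longrightarrow> y a = 0) \<and> (\<forall>b\<in>S. r b < n \<longrightarrow> (\<Sum>a\<in>S. y a * M a b) = g b)" for n
  proof (induction n)
    case 0 then show ?case by (intro exI[of _ "\<lambda>_. 0"]) simp
  next
    case (Suc n)
    then obtain y where y1: "\<forall>a. a \<notin> S \<or> r a \<ge> n \<longrightarrow> y a = 0"
      and y2: "\<forall>b\<in>S. r b < n \<longrightarrow> (\<Sum>a\<in>S. y a * M a b) = g b" by blast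
    define d where "d a = (if a \<in> S \<and> r a = n then g a - (\<Sum>c\<in>S. y c * M c a) else 0)" for a
    define y' where "y' a = y a + d a" for a
    show ?case
    proof (intro exI[of _ y'] conjI allI impI ballI)
      fix a assume "a \<notin> S \<or> Suc n \<le> r a"
      then show "y' a = 0" using y1 by (auto simp: y'_def d_def)
    next
      fix b assume b: "b \<in> S" "r b < Suc n"
      have s: "(\<Sum>a\<in>S. y' a * M a b) = (\<Sum>a\<in>S. y a * M a b) + (\<Sum>a\<in>S. d a * M a b)"
        by (simp add: y'_def distrib_right sum.distrib)
      have t: "d a * M a b = (if a = b then d b else 0)" if a: "a \<in> S" for a
      proof (cases "a = b")
        case True then show ?thesis using diag b by simp
      next
        case False
        show ?thesis
        proof (cases "r a = n")
          case True
          then have "M a b = 0" using tri a b False by fastforce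
          then show ?thesis using False by simp
        next
          case False2: False
          then show ?thesis using False by (simp add: d_def)
        qed
      qed
      have "(\<Sum>a\<in>S. d a * M a b) = (\<Sum>a\<in>S. if a = b then d b else 0)"
        using t by (rule sum.cong[OF refl])
      also have "\<dots> = d b" using fin b by simp
      finally have u: "(\<Sum>a\<in>S. d a * M a b) = d b" .
      show "(\<Sum>a\<in>S. y' a * M a b) = g b"
      proof (cases "r b = n")
        case True
        then show ?thesis using s u b by (simp add: d_def)
      next
        case False
        then show ?thesis using s u b y2 by (simp add: d_def)
      qed
    qed
  qed
  from this[of "Suc (sum r S)"] obtain y where
    y1: "\<forall>a. a \<notin> S \<or> r a \<ge> Suc (sum r S) \<longrightarrow> y a = 0"
    and y2: "\<forall>b\<in>S. r b < Suc (sum r S) \<longrightarrow> (\<Sum>a\<in>S. y a * M a b) = g b" by blast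
  have "\<forall>b\<in>S. r b < Suc (sum r S)" using fin by (simp add: le_imp_less_Suc member_le_sum)
  then show ?thesis using y1 y2 by blast
qed


lemma finite_verts: "finite (verts ps)"
proof -
  have "{Vij i j | i j. i < length ps \<and> 1 \<le> j \<and> j < ps ! i}
        \<subseteq> (\<lambda>(i,j). Vij i j) ` (SIGMA i:{..<length ps}. {..<ps ! i})" by auto
  moreover have "finite ((\<lambda>(i,j). Vij i j) ` (SIGMA i:{..<length ps}. {..<ps ! i}))" by auto
  ultimately have "finite {Vij i j | i j. i < length ps \<and> 1 \<le> j \<and> j < ps ! i}" by (rule finite_subset)
  then show ?thesis unfolding verts_def by simp
qed

lemma verts_simps [simp]: "V0 \<in> verts ps" "Vc \<in> verts ps"
  "Vij i j \<in> verts ps \<longleftrightarrow> i < length ps \<and> 1 \<le> j \<and> j < ps ! i"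
  by (auto simp: verts_def)

lemma homdim_diag [simp]: "homdim a a = 1"
  by (cases a) auto

definition rk :: "nat list \<Rightarrow> vert \<Rightarrow> nat" where
  "rk ps v = (case v of V0 \<Rightarrow> 0 | Vc \<Rightarrow> Suc (sum_list ps) | Vij i j \<Rightarrow> j)"

lemma rk_le: "a \<in> verts ps \<Longrightarrow> rk ps a \<le> Suc (sum_list ps)"
proof (cases a)
  case (Vij i j)
  assume "a \<in> verts ps"
  then show ?thesis using Vij elem_le_sum_list[of i ps] by (auto simp: rk_def)
qed (auto simp: rk_def)

lemma tri_verts:
  assumes "a \<in> verts ps" "b \<in> verts ps" "a \<noteq> b" "homdim a b \<noteq> 0"
  shows "rk ps a < rk ps b"
proof (cases a)
  case V0 then show ?thesis using assms by (cases b) (auto simp: rk_def)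
next
  case Vc then show ?thesis using assms by (cases b) (auto simp: rk_def)
next
  case (Vij i j) then show ?thesis using assms elem_le_sum_list[of i ps]
    by (cases b) (auto simp: rk_def split: if_splits)
qed

abbreviation M :: "vert \<Rightarrow> vert \<Rightarrow> 'a::comm_ring_1" where
  "M a b \<equiv> of_nat (homdim a b)"

lemma tri_M: "\<forall>a\<in>verts ps. \<forall>b\<in>verts ps. a \<noteq> b \<and> (M a b :: 'a::comm_ring_1) \<noteq> 0 \<longrightarrow> rk ps a < rk ps b"
  using tri_verts by fastforce

lemma tri_MT: "\<forall>a\<in>verts ps. \<forall>b\<in>verts ps. a \<noteq> b \<and> (M b a :: 'a::comm_ring_1) \<noteq> 0 \<longrightarrow>
   Suc (Suc (sum_list ps)) - rk ps a < Suc (Suc (sum_list ps)) - rk ps b"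
proof (intro ballI impI)
  fix a b assume a: "a \<in> verts ps" and b: "b \<in> verts ps" and c: "a \<noteq> b \<and> (M b a :: 'a) \<noteq> 0"
  have "homdim b a \<noteq> 0" using c by (metis of_nat_0)
  then have "rk ps b < rk ps a" using tri_verts[of b ps a] a b c by auto
  then show "Suc (Suc (sum_list ps)) - rk ps a < Suc (Suc (sum_list ps)) - rk ps b"
    using rk_le[OF a] by linarith
qed

definition e :: "vert \<Rightarrow> vert \<Rightarrow> 'a::comm_ring_1" where
  "e b = (\<lambda>v. if v = b then 1 else 0)"

lemma e_K0: "b \<in> verts ps \<Longrightarrow> e b \<in> K0 ps"
  by (auto simp: e_def K0_def)

lemma euler_e_right:
  assumes "b \<in> verts ps"
  shows "euler ps y (e b) = (\<Sum>a\<in>verts ps. y a * M a b)"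
  unfolding euler_def e_def using assms finite_verts
  by (simp add: if_distrib cong: if_cong)

lemma euler_e_left:
  assumes "a \<in> verts ps"
  shows "euler ps (e a) z = (\<Sum>b\<in>verts ps. z b * M a b)"
proof -
  have "\<And>aa. (\<Sum>b\<in>verts ps. e a aa * M aa b * z b) = (if aa = a then (\<Sum>b\<in>verts ps. z b * M a b) else 0)"
    by (simp add: e_def mult.commute)
  then show ?thesis unfolding euler_def using assms finite_verts by simp
qed

lemma euler_expand:
  "euler ps y x = (\<Sum>b\<in>verts ps. x b * (\<Sum>a\<in>verts ps. y a * M a b))"
  unfolding euler_def by (subst sum.swap) (simp add: sum_distrib_left mult.commute mult.left_commute)

lemma euler_add_right: "euler ps y (\<lambda>v. x v + x' v) = euler ps y x + euler ps y x'"
  unfolding euler_def by (simp add: distrib_left sum.distrib)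

lemma euler_add_left: "euler ps (\<lambda>v. y v + y' v) x = euler ps y x + euler ps y' x"
  unfolding euler_def by (simp add: distrib_right sum.distrib)

lemma euler_diff_left: "euler ps (\<lambda>v. y v - y' v) x = euler ps y x - euler ps y' x"
  unfolding euler_def by (simp add: left_diff_distrib sum_subtractf)

lemma euler_neg_right: "euler ps y (\<lambda>v. - x v) = - euler ps y x"
  unfolding euler_def by (simp add: sum_negf)

lemma nondeg_left:
  fixes y :: "vert \<Rightarrow> 'a::comm_ring_1"
  assumes "y \<in> K0 ps" "\<forall>x\<in>K0 ps. euler ps y x = 0"
  shows "y = (\<lambda>_. 0)"
proof -
  have "\<forall>b\<in>verts ps. (\<Sum>a\<in>verts ps. y a * M a b) = 0"
    using assms(2) e_K0 euler_e_right by metis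
  then have "\<forall>b\<in>verts ps. y b = 0"
    using tri_inj[OF finite_verts _ tri_M] by simp
  then show ?thesis using assms(1) by (auto simp: K0_def)
qed

lemma nondeg_right:
  fixes z :: "vert \<Rightarrow> 'a::comm_ring_1"
  assumes "z \<in> K0 ps" "\<forall>x\<in>K0 ps. euler ps x z = 0"
  shows "z = (\<lambda>_. 0)"
proof -
  have "\<forall>b\<in>verts ps. (\<Sum>a\<in>verts ps. z a * M b a) = 0"
    using assms(2) e_K0 euler_e_left by metis
  then have "\<forall>b\<in>verts ps. z b = 0"
    using tri_inj[OF finite_verts _ tri_MT] by simp
  then show ?thesis using assms(1) by (auto simp: K0_def)
qed

lemma additive_zero:
  fixes f :: "(vert \<Rightarrow> 'a::comm_ring_1) \<Rightarrow> 'a"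
  assumes add: "\<forall>x\<in>K0 ps. \<forall>x'\<in>K0 ps. f (\<lambda>v. x v + x' v) = f x + f x'"
  shows "f (\<lambda>_. 0) = 0"
proof -
  have z: "(\<lambda>_. 0) \<in> K0 ps" by (simp add: K0_def)
  have "f (\<lambda>v. 0 + 0) = f (\<lambda>_. 0) + f (\<lambda>_. 0)" using bspec[OF bspec[OF add z] z] by simp
  then show ?thesis by simp
qed

lemma decompose:
  fixes f :: "(vert \<Rightarrow> 'a::comm_ring_1) \<Rightarrow> 'a"
  assumes add: "\<forall>x\<in>K0 ps. \<forall>x'\<in>K0 ps. f (\<lambda>v. x v + x' v) = f x + f x'"
    and x: "x \<in> K0 ps"
  shows "f x = (\<Sum>b\<in>verts ps. f (\<lambda>v. if v = b then x b else 0))"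
proof -
  have "T \<subseteq> verts ps \<Longrightarrow> f (\<lambda>v. if v \<in> T then x v else 0) = (\<Sum>b\<in>T. f (\<lambda>v. if v = b then x b else 0))"
    if "finite T" for T
    using that
  proof (induction T rule: finite_induct)
    case empty then show ?case using additive_zero[OF add] by simp
  next
    case (insert c T)
    have eq: "(\<lambda>v. if v \<in> insert c T then x v else 0) =
      (\<lambda>v. (if v = c then x c else 0) + (if v \<in> T then x v else 0))"
      using insert(2) by auto
    have k1: "(\<lambda>v. if v = c then x c else 0) \<in> K0 ps" using insert(4) by (auto simp: K0_def)
    have k2: "(\<lambda>v. if v \<in> T then x v else 0) \<in> K0 ps" using insert(4) by (auto simp: K0_def)
    show ?case unfolding eq using add k1 k2 insert by simp
  qed
  from this[OF finite_verts] have "f (\<lambda>v. if v \<in> verts ps then x v else 0) = (\<Sum>b\<in>verts ps. f (\<lambda>v. if v = b then x b else 0))" by simp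
  moreover have "(\<lambda>v. if v \<in> verts ps then x v else 0) = x" using x by (auto simp: K0_def)
  ultimately show ?thesis by simp
qed

lemma represent:
  fixes f :: "(vert \<Rightarrow> 'a::comm_ring_1) \<Rightarrow> 'a"
  assumes add: "\<forall>x\<in>K0 ps. \<forall>x'\<in>K0 ps. f (\<lambda>v. x v + x' v) = f x + f x'"
    and lin: "\<forall>b\<in>verts ps. \<forall>c. f (\<lambda>v. if v = b then c else 0) = c * f (e b)"
  shows "\<exists>y\<in>K0 ps. \<forall>x\<in>K0 ps. f x = euler ps y x"
proof -
  obtain y where y1: "\<forall>a. a \<notin> verts ps \<longrightarrow> y a = 0"
    and y2: "\<forall>b\<in>verts ps. (\<Sum>a\<in>verts ps. y a * M a b) = f (e b)"
    using tri_ex[OF finite_verts[of ps] _ tri_M[of ps], where g="\<lambda>b. f (e b)"] by auto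
  have "y \<in> K0 ps" using y1 by (simp add: K0_def)
  moreover have "f x = euler ps y x" if x: "x \<in> K0 ps" for x
  proof -
    have "f x = (\<Sum>b\<in>verts ps. f (\<lambda>v. if v = b then x b else 0))" by (rule decompose[OF add x])
    also have "\<dots> = (\<Sum>b\<in>verts ps. x b * f (e b))" using lin by simp
    also have "\<dots> = euler ps y x" unfolding euler_expand using y2 by simp
    finally show ?thesis .
  qed
  ultimately show ?thesis by blast
qed


lemma main_gen:
  fixes \<Phi> :: "(vert \<Rightarrow> 'a::comm_ring_1) \<Rightarrow> (vert \<Rightarrow> 'a)"
  assumes closed: "\<forall>x\<in>K0 ps. \<Phi> x \<in> K0 ps"
    and serre: "\<forall>x\<in>K0 ps. \<forall>y\<in>K0 ps. euler ps y (\<Phi> x) = - euler ps x y"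
    and lin: "\<And>f::(vert \<Rightarrow> 'a) \<Rightarrow> 'a. \<forall>x\<in>K0 ps. \<forall>x'\<in>K0 ps. f (\<lambda>v. x v + x' v) = f x + f x' \<Longrightarrow>
       \<forall>b\<in>verts ps. \<forall>c. f (\<lambda>v. if v = b then c else 0) = c * f (e b)"
  shows "bij_betw (\<lambda>y. restrict (\<lambda>x. euler ps y x) (K0 ps))
              {y \<in> K0 ps. (\<forall>v. - \<Phi> y v = y v)} (lforms ps \<Phi>)"
proof -
  have sum_K0: "(\<lambda>v. x v + x' v) \<in> K0 ps" if "x \<in> K0 ps" "x' \<in> K0 ps" for x x' :: "vert \<Rightarrow> 'a"
    using that by (simp add: K0_def)
  have key: "euler ps y (\<lambda>v. x v + \<Phi> x v) = euler ps y x - euler ps x y"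
    if "x \<in> K0 ps" "y \<in> K0 ps" for x y
    using serre that by (simp add: euler_add_right)
  have symm: "euler ps y x = - euler ps x (\<Phi> y)"
    if "x \<in> K0 ps" "y \<in> K0 ps" for x y
    using serre that by simp
  show ?thesis
  proof (rule bij_betwI')
    fix y y' assume y: "y \<in> {y \<in> K0 ps. (\<forall>v. - \<Phi> y v = y v)}" and y': "y' \<in> {y \<in> K0 ps. (\<forall>v. - \<Phi> y v = y v)}"
    show "(restrict (euler ps y) (K0 ps) = restrict (euler ps y') (K0 ps)) = (y = y')"
    proof
      assume h: "restrict (euler ps y) (K0 ps) = restrict (euler ps y') (K0 ps)"
      have "\<forall>x\<in>K0 ps. euler ps (\<lambda>v. y v - y' v) x = 0"
      proof
        fix x :: "vert \<Rightarrow> 'a" assume "x \<in> K0 ps"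
        then have "euler ps y x = euler ps y' x" using fun_cong[OF h, of x] by simp
        then show "euler ps (\<lambda>v. y v - y' v) x = 0" by (simp add: euler_diff_left)
      qed
      moreover have "(\<lambda>v. y v - y' v) \<in> K0 ps" using y y' by (simp add: K0_def)
      ultimately have "(\<lambda>v. y v - y' v) = (\<lambda>_. 0)" using nondeg_left by blast
      then have "y v - y' v = 0" for v by (rule fun_cong[where x=v, THEN trans]) simp
      then show "y = y'" by (simp add: fun_eq_iff)
    qed simp
  next
    fix y assume y: "y \<in> {y \<in> K0 ps. (\<forall>v. - \<Phi> y v = y v)}"
    then have yK: "y \<in> K0 ps" and yP: "\<forall>v. - \<Phi> y v = y v" by auto
    have Py: "\<Phi> y = (\<lambda>v. - y v)" proof
      fix v have "- \<Phi> y v = y v" using yP by blast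
      then show "\<Phi> y v = - y v" by (simp add: minus_equation_iff)
    qed
    show "restrict (euler ps y) (K0 ps) \<in> lforms ps \<Phi>"
      unfolding lforms_def
    proof (intro CollectI conjI ballI)
      show "restrict (euler ps y) (K0 ps) \<in> extensional (K0 ps)" by simp
    next
      fix x x' :: "vert \<Rightarrow> 'a" assume "x \<in> K0 ps" "x' \<in> K0 ps"
      then show "restrict (euler ps y) (K0 ps) (\<lambda>v. x v + x' v) =
        restrict (euler ps y) (K0 ps) x + restrict (euler ps y) (K0 ps) x'"
        using sum_K0 by (simp add: euler_add_right)
    next
      fix x :: "vert \<Rightarrow> 'a" assume x: "x \<in> K0 ps"
      have "(\<lambda>v. x v + \<Phi> x v) \<in> K0 ps" using sum_K0 closed x by blast
      moreover have "euler ps x y = euler ps y x"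
        using symm[OF x yK] by (simp add: Py euler_neg_right)
      ultimately show "restrict (euler ps y) (K0 ps) (\<lambda>v. x v + \<Phi> x v) = 0"
        using key[OF x yK] by simp
    qed
  next
    fix f assume f: "f \<in> lforms ps \<Phi>"
    then have fe: "f \<in> extensional (K0 ps)"
      and add: "\<forall>x\<in>K0 ps. \<forall>x'\<in>K0 ps. f (\<lambda>v. x v + x' v) = f x + f x'"
      and van: "\<forall>x\<in>K0 ps. f (\<lambda>v. x v + \<Phi> x v) = 0"
      unfolding lforms_def by auto
    obtain y where yK: "y \<in> K0 ps" and fy: "\<forall>x\<in>K0 ps. f x = euler ps y x"
      using represent[OF add lin[OF add]] by blast
    have feq: "f = restrict (euler ps y) (K0 ps)"
      using fe fy by (auto simp: extensional_def)
    have z: "(\<lambda>v. \<Phi> y v + y v) \<in> K0 ps" using sum_K0 closed yK by blast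
    have "\<forall>x\<in>K0 ps. euler ps x (\<lambda>v. \<Phi> y v + y v) = 0"
    proof
      fix x :: "vert \<Rightarrow> 'a" assume x: "x \<in> K0 ps"
      have "(\<lambda>v. x v + \<Phi> x v) \<in> K0 ps" using sum_K0 closed x by blast
      then have "f (\<lambda>v. x v + \<Phi> x v) = euler ps y (\<lambda>v. x v + \<Phi> x v)" using fy by blast
      then have "euler ps y x - euler ps x y = 0" using van x key[OF x yK] by simp
      then show "euler ps x (\<lambda>v. \<Phi> y v + y v) = 0"
        using symm[OF x yK] by (simp add: euler_add_right) (metis neg_eq_iff_add_eq_0)
    qed
    then have "(\<lambda>v. \<Phi> y v + y v) = (\<lambda>_. 0)" using nondeg_right z by blast
    then have "\<Phi> y v + y v = 0" for v by (rule fun_cong[where x=v, THEN trans]) simp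
    then have "\<forall>v. - \<Phi> y v = y v" by (simp add: add_eq_0_iff)
    then show "\<exists>y\<in>{y \<in> K0 ps. \<forall>v. - \<Phi> y v = y v}. f = restrict (euler ps y) (K0 ps)"
      using yK feq by blast
  qed
qed


lemma lin_int:
  fixes f :: "(vert \<Rightarrow> int) \<Rightarrow> int"
  assumes add: "\<forall>x\<in>K0 ps. \<forall>x'\<in>K0 ps. f (\<lambda>v. x v + x' v) = f x + f x'"
  shows "\<forall>b\<in>verts ps. \<forall>c. f (\<lambda>v. if v = b then c else 0) = c * f (e b)"
proof (intro ballI allI)
  fix b c assume b: "b \<in> verts ps"
  have K: "(\<lambda>v. if v = b then d else 0) \<in> K0 ps" for d :: int using b by (auto simp: K0_def)
  have z: "f (\<lambda>_. 0) = 0" using additive_zero[OF add] .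
  have nat: "f (\<lambda>v. if v = b then int n else 0) = int n * f (e b)" for n
  proof (induction n)
    case 0
    have "(\<lambda>v. if v = b then int 0 else 0) = (\<lambda>_. 0::int)" by auto
    then show ?case using z by simp
  next
    case (Suc n)
    have eq: "(\<lambda>v. if v = b then int (Suc n) else 0) = (\<lambda>v. (if v = b then int n else 0) + e b v)"
      by (auto simp: e_def)
    have "f (\<lambda>v. (if v = b then int n else 0) + e b v) = f (\<lambda>v. if v = b then int n else 0) + f (e b)"
      using bspec[OF bspec[OF add K[of "int n"]] e_K0[OF b]] by simp
    then show ?case unfolding eq using Suc by (simp add: algebra_simps)
  qed
  have neg: "f (\<lambda>v. if v = b then - int n else 0) = - int n * f (e b)" for n
  proof -
    have "f (\<lambda>v. (if v = b then - int n else 0) + (if v = b then int n else 0)) =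
      f (\<lambda>v. if v = b then - int n else 0) + f (\<lambda>v. if v = b then int n else 0)"
      using bspec[OF bspec[OF add K[of "- int n"]] K[of "int n"]] by simp
    moreover have "(\<lambda>v. (if v = b then - int n else 0) + (if v = b then int n else (0::int))) = (\<lambda>_. 0)"
      by auto
    ultimately show ?thesis using z nat[of n] by simp
  qed
  show "f (\<lambda>v. if v = b then c else 0) = c * f (e b)"
  proof (cases "c \<ge> 0")
    case True
    then show ?thesis using nat[of "nat c"] by (simp cong: if_cong)
  next
    case False
    then show ?thesis using neg[of "nat (- c)"] by (simp cong: if_cong)
  qed
qed

lemma lin_bit:
  fixes f :: "(vert \<Rightarrow> bit) \<Rightarrow> bit"
  assumes add: "\<forall>x\<in>K0 ps. \<forall>x'\<in>K0 ps. f (\<lambda>v. x v + x' v) = f x + f x'"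
  shows "\<forall>b\<in>verts ps. \<forall>c. f (\<lambda>v. if v = b then c else 0) = c * f (e b)"
proof (intro ballI allI)
  fix b and c :: bit assume b: "b \<in> verts ps"
  have z: "f (\<lambda>_. 0) = 0" using additive_zero[OF add] .
  have "c = 0 \<or> c = 1" by auto
  moreover have "(\<lambda>v. if v = b then 0 else 0) = (\<lambda>_. 0::bit)" by auto
  ultimately show "f (\<lambda>v. if v = b then c else 0) = c * f (e b)"
    using z by (auto simp: e_def)
qed

lemma euler_red: "euler ps (red x) (red y) = of_int (euler ps x y)"
  unfolding euler_def red_def by (simp add: of_int_sum)

lemma red_K0: "x \<in> K0 ps \<Longrightarrow> red x \<in> K0 ps"
  by (simp add: K0_def red_def)

lemma red_surj: "y \<in> K0 ps \<Longrightarrow> \<exists>x\<in>K0 ps. y = red x"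
proof -
  assume y: "y \<in> K0 ps"
  define x :: "vert \<Rightarrow> int" where "x v = (if y v = 1 then 1 else 0)" for v
  have "x \<in> K0 ps" using y by (auto simp: K0_def x_def)
  moreover have "y = red x"
  proof
    fix v
    have "y v = 0 \<or> y v = 1" by auto
    then show "y v = red x v" by (auto simp: red_def x_def)
  qed
  ultimately show ?thesis by blast
qed

theorem proposition3p9:
  fixes ps :: "nat list"
    and \<Phi> :: "(vert \<Rightarrow> int) \<Rightarrow> (vert \<Rightarrow> int)"
    and \<Phi>2 :: "(vert \<Rightarrow> bit) \<Rightarrow> (vert \<Rightarrow> bit)"
  assumes weights: "\<forall>i<length ps. 2 \<le> ps ! i"
    and Phi_closed: "\<forall>x\<in>K0 ps. \<Phi> x \<in> K0 ps"
    and Phi_serre: "\<forall>x\<in>K0 ps. \<forall>y\<in>K0 ps. euler ps y (\<Phi> x) = - euler ps x y"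
    and Phi2_induced: "\<forall>x\<in>K0 ps. \<Phi>2 (red x) = red (\<Phi> x)"
  shows "((\<exists>i<length ps. even (ps ! i)) \<longrightarrow>
            bij_betw (\<lambda>y. restrict (\<lambda>x. euler ps y x) (K0 ps))
              {y \<in> K0 ps. (\<forall>v. - \<Phi> y v = y v)} (lforms ps \<Phi>))
       \<and> ((\<forall>i<length ps. odd (ps ! i)) \<longrightarrow>
            bij_betw (\<lambda>y. restrict (\<lambda>x. euler ps y x) (K0 ps))
              {y \<in> K0 ps. (\<forall>v. - \<Phi>2 y v = y v)} (lforms ps \<Phi>2))"
proof -
  have i: "bij_betw (\<lambda>y. restrict (\<lambda>x. euler ps y x) (K0 ps))
              {y \<in> K0 ps. (\<forall>v. - \<Phi> y v = y v)} (lforms ps \<Phi>)"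
    by (rule main_gen[OF Phi_closed Phi_serre lin_int]) blast
  have c2: "\<forall>x\<in>K0 ps. \<Phi>2 x \<in> K0 ps"
  proof
    fix y :: "vert \<Rightarrow> bit" assume "y \<in> K0 ps"
    then obtain x where x: "x \<in> K0 ps" "y = red x" using red_surj by blast
    then show "\<Phi>2 y \<in> K0 ps" using Phi2_induced Phi_closed red_K0 by simp
  qed
  have s2: "\<forall>x\<in>K0 ps. \<forall>y\<in>K0 ps. euler ps y (\<Phi>2 x) = - euler ps x y"
  proof (intro ballI)
    fix x' y' :: "vert \<Rightarrow> bit" assume "x' \<in> K0 ps" "y' \<in> K0 ps"
    then obtain x y where x: "x \<in> K0 ps" "x' = red x" and y: "y \<in> K0 ps" "y' = red y"
      using red_surj by metis
    have "euler ps (red y) (\<Phi>2 (red x)) = euler ps (red y) (red (\<Phi> x))" using Phi2_induced x by simp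
    also have "\<dots> = of_int (- euler ps x y)" using euler_red Phi_serre x y by simp
    also have "\<dots> = - euler ps (red x) (red y)" by (simp add: euler_red)
    finally show "euler ps y' (\<Phi>2 x') = - euler ps x' y'" using x y by simp
  qed
  have ii: "bij_betw (\<lambda>y. restrict (\<lambda>x. euler ps y x) (K0 ps))
              {y \<in> K0 ps. (\<forall>v. - \<Phi>2 y v = y v)} (lforms ps \<Phi>2)"
    by (rule main_gen[OF c2 s2 lin_bit]) blast
  show ?thesis using i ii by blast
qed

end
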